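(* Let $g\in\mathcal{G}$ be $\mathbb{S}$-nearly periodic. Then either $g$ is not 1-pass tractable, or for every $\eta>0$ the function $L_\eta(g)$ is not 1-pass tractable, where $L_\eta(g)(x)=g(x)\log^\eta(1+x)$.
   Context: Streams: a stream of length $m$ with domain $[n]$ is a list $D=\langle (i_1,\delta_1),\dots,(i_m,\delta_m)\rangle$ with $i_j\in[n]$, $\delta_j\in\mathbb{Z}$; its frequency vector $V(D)=v\in\mathbb{Z}^n$ has $v_i=\sum_{j:i_j=i}\delta_j$. (Turnstile model) there is $M\in\mathbb{N}$ such that the frequency vector of $D$ and of every prefix of $D$ lies in $\{-M,\dots,M\}^n$; throughout $M$ is polynomial in $n$. $\mathcal{D}(n,m)$ is the set of such streams with domain $[n]$ and length at most $m$. A $p$-pass algorithm reads the stream $p$ times in order and may use randomness. For $g:\mathbb{Z}_{\ge0}\to\mathbb{R}$ and $v\in\mathbb{Z}^n$ let $g(v)=\sum_{i=1}^n g(|v_i|)$. The problem $(g,\epsilon)$-SUM is to output $\hat G$ with $P\big((1-\epsilon)g(V(D))\le \hat G\le (1+\epsilon)g(V(D))\big)\ge 2/3$. A function $f:\mathbb{R}_{\ge0}\to\mathbb{R}_{\ge0}$ is sub-polynomial if for every $\alpha>0$, $\lim_{x\to\infty}x^\alpha f(x)=\infty$ and $\lim_{x\to\infty}x^{-\alpha}f(x)=0$. $g$ is $p$-pass tractable if for every sub-polynomial $h$ and every $\epsilon\ge 1/h(nM)$ there exist a sub-polynomial $h^*$ and a $p$-pass algorithm (with oracle access to $g$) that solves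 $(g,\epsilon)$-SUM for all streams in $\mathcal{D}(n,m)$ and all $n,M\ge1$ using at most $h^*(nM)$ bits of space in the worst case. $\mathcal{G}=\{g:\mathbb{Z}_{\ge0}\to\mathbb{R}: g(0)=0,\ g(1)=1,\ g(x)>0\ \forall x>0\}$. For a set $\mathcal{S}$ of functions, $g$ is $\mathcal{S}$-nearly periodic if (1) there is $\alpha>0$ such that for every $N>0$ there exist $x,y\in\mathbb{N}$, $x<y$, $y\ge N$ with $g(y)\le g(x)/y^\alpha$ (such $y$ is called an $\alpha$-period of $g$); and (2) for every $\alpha>0$ and every $h\in\mathcal{S}$ there is $N_1>0$ such that for all $\alpha$-periods $y\ge N_1$ and all $x<y$ with $g(y)y^\alpha\le g(x)$, $|g(x+y)-g(x)|\le \min\{g(x),g(x+y)\}h(y)$. $\mathbb{S}$ denotes the set of non-increasing sub-polynomial functions on $\mathbb{Z}_{\ge0}$. *)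

theory Defs
  imports "HOL-Probability.Probability"
begin

(* Streams: lists of updates (i, delta); domain [n] is rendered as {0..<n}. *)
type_synonym stream = "(nat \<times> int) list"

definition freq :: "stream \<Rightarrow> nat \<Rightarrow> int" where
  "freq D i = sum_list (map snd (filter (\<lambda>u. fst u = i) D))"

definition streams :: "nat \<Rightarrow> nat \<Rightarrow> nat \<Rightarrow> stream set" where
  "streams n M m = {D. length D \<le> m \<and> (\<forall>u\<in>set D. fst u < n) \<and>
      (\<forall>k\<le>length D. \<forall>i<n. \<bar>freq (take k D) i\<bar> \<le> int M)}"

definition gsum :: "(nat \<Rightarrow> real) \<Rightarrow> nat \<Rightarrow> stream \<Rightarrow> real" where
  "gsum g n D = (\<Sum>i<n. g (nat \<bar>freq D i\<bar>))"

record alg1 =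
  seed :: "nat pmf"
  init :: "nat \<Rightarrow> bool list"
  step :: "nat \<Rightarrow> bool list \<Rightarrow> nat \<times> int \<Rightarrow> bool list"
  out  :: "nat \<Rightarrow> bool list \<Rightarrow> real"

definition run :: "alg1 \<Rightarrow> nat \<Rightarrow> stream \<Rightarrow> bool list" where
  "run A r D = fold (\<lambda>u st. step A r st u) D (init A r)"

definition space_le :: "alg1 \<Rightarrow> stream set \<Rightarrow> real \<Rightarrow> bool" where
  "space_le A S s = (\<forall>D\<in>S. \<forall>r\<in>set_pmf (seed A). \<forall>k\<le>length D.
      real (length (run A r (take k D))) \<le> s)"

definition solves :: "alg1 \<Rightarrow> (nat \<Rightarrow> real) \<Rightarrow> real \<Rightarrow> nat \<Rightarrow> stream set \<Rightarrow> bool" where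
  "solves A g eps n S = (\<forall>D\<in>S.
      measure_pmf.prob (seed A)
        {r. (1 - eps) * gsum g n D \<le> out A r (run A r D)
          \<and> out A r (run A r D) \<le> (1 + eps) * gsum g n D} \<ge> 2/3)"

definition sub_polynomial :: "(real \<Rightarrow> real) \<Rightarrow> bool" where
  "sub_polynomial f = ((\<forall>x\<ge>0. f x \<ge> 0) \<and>
     (\<forall>a>0. filterlim (\<lambda>x. x powr a * f x) at_top at_top) \<and>
     (\<forall>a>0. ((\<lambda>x. x powr (-a) * f x) \<longlongrightarrow> 0) at_top))"

definition one_pass_tractable :: "(nat \<Rightarrow> real) \<Rightarrow> bool" where
  "one_pass_tractable g = (\<forall>h. sub_polynomial h \<longrightarrow> (\<exists>hs. sub_polynomial hs \<and>
     (\<forall>n M m eps. n \<ge> 1 \<longrightarrow> M \<ge> 1 \<longrightarrow> eps > 0 \<longrightarrow> eps \<ge> 1 / h (real n * real M) \<longrightarrow>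
        (\<exists>A. solves A g eps n (streams n M m) \<and>
             space_le A (streams n M m) (hs (real n * real M))))))"

definition class_G :: "(nat \<Rightarrow> real) set" where
  "class_G = {g. g 0 = 0 \<and> g 1 = 1 \<and> (\<forall>x>0. g x > 0)}"

definition class_S :: "(nat \<Rightarrow> real) set" where
  "class_S = {f. antimono f \<and> (\<forall>x. f x \<ge> 0) \<and>
     (\<forall>a>0. filterlim (\<lambda>x. real x powr a * f x) at_top sequentially) \<and>
     (\<forall>a>0. ((\<lambda>x. real x powr (-a) * f x) \<longlongrightarrow> 0) sequentially)}"

definition is_period :: "(nat \<Rightarrow> real) \<Rightarrow> real \<Rightarrow> nat \<Rightarrow> bool" where
  "is_period g a y = (\<exists>x<y. g y \<le> g x / real y powr a)"

definition nearly_periodic :: "(nat \<Rightarrow> real) set \<Rightarrow> (nat \<Rightarrow> real) \<Rightarrow> bool" where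
  "nearly_periodic SS g =
    ((\<exists>a>0. \<forall>N>0. \<exists>x y::nat. x < y \<and> real y \<ge> N \<and> g y \<le> g x / real y powr a) \<and>
     (\<forall>a>0. \<forall>h\<in>SS. \<exists>N1>0. \<forall>y x. is_period g a y \<and> real y \<ge> N1 \<and> x < y \<and>
         g y * real y powr a \<le> g x \<longrightarrow>
         \<bar>g (x + y) - g x\<bar> \<le> min (g x) (g (x + y)) * h y))"

(* L_eta(g)(x) = g(x) * log^eta (1+x)  (log base 2, so L_eta(g)(1) = 1) *)
definition L_eta :: "real \<Rightarrow> (nat \<Rightarrow> real) \<Rightarrow> nat \<Rightarrow> real" where
  "L_eta eta g x = g x * (log 2 (1 + real x)) powr eta"

end

theory Submission
  imports Defs "HOL-Real_Asymp.Real_Asymp"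
begin



definition agr :: "nat set \<Rightarrow> nat set \<Rightarrow> nat set \<Rightarrow> nat" where
  "agr U C B = card {i\<in>U. (i\<in>C) = (i\<in>B)}"

lemma agr_le: "finite U \<Longrightarrow> agr U C B \<le> card U"
  unfolding agr_def by (intro card_mono) auto

lemma agr_insert1:
  assumes "finite U" "a \<notin> U" "B \<subseteq> U"
  shows "agr (insert a U) C B = agr U C B + (if a \<in> C then 0 else 1)"
proof -
  have "a \<notin> B" using assms by auto
  have e: "{i\<in>insert a U. (i\<in>C) = (i\<in>B)} = (if a \<in> C then {i\<in>U. (i\<in>C) = (i\<in>B)} else insert a {i\<in>U. (i\<in>C) = (i\<in>B)})"
    using \<open>a \<notin> B\<close> by auto
  show ?thesis unfolding agr_def e using assms by auto
qed

lemma agr_insert2: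
  assumes "finite U" "a \<notin> U" "B \<subseteq> U"
  shows "agr (insert a U) C (insert a B) = agr U C B + (if a \<in> C then 1 else 0)"
proof -
  have e1: "{i\<in>U. (i\<in>C) = (i\<in>insert a B)} = {i\<in>U. (i\<in>C) = (i\<in>B)}" using assms by auto
  have e: "{i\<in>insert a U. (i\<in>C) = (i\<in>insert a B)} = (if a \<in> C then insert a {i\<in>U. (i\<in>C) = (i\<in>B)} else {i\<in>U. (i\<in>C) = (i\<in>B)})"
    using e1 by auto
  show ?thesis unfolding agr_def e using assms by auto
qed

lemma pow_sum:
  assumes "finite U"
  shows "(\<Sum>B\<in>Pow U. (2::real) ^ agr U C B) = 3 ^ card U"
  using assms
proof (induction U rule: finite_induct)
  case empty
  then show ?case by (simp add: agr_def)
next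
  case (insert a U)
  have disj: "Pow U \<inter> insert a ` Pow U = {}" using insert by auto
  have inj: "inj_on (insert a) (Pow U)" unfolding inj_on_def using insert by auto
  have "(\<Sum>B\<in>Pow (insert a U). (2::real) ^ agr (insert a U) C B)
      = (\<Sum>B\<in>Pow U. (2::real) ^ agr (insert a U) C B) + (\<Sum>B\<in>insert a ` Pow U. (2::real) ^ agr (insert a U) C B)"
    unfolding Pow_insert using disj insert by (intro sum.union_disjoint) auto
  also have "(\<Sum>B\<in>insert a ` Pow U. (2::real) ^ agr (insert a U) C B) = (\<Sum>B\<in>Pow U. (2::real) ^ agr (insert a U) C (insert a B))"
    using inj by (simp add: sum.reindex)
  also have "(\<Sum>B\<in>Pow U. (2::real) ^ agr (insert a U) C (insert a B)) = (\<Sum>B\<in>Pow U. (2::real) ^ agr U C B * (if a \<in> C then 2 else 1))"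
    using insert by (intro sum.cong refl) (auto simp: agr_insert2 power_add)
  also have "(\<Sum>B\<in>Pow U. (2::real) ^ agr (insert a U) C B) = (\<Sum>B\<in>Pow U. (2::real) ^ agr U C B * (if a \<in> C then 1 else 2))"
    using insert by (intro sum.cong refl) (auto simp: agr_insert1 power_add)
  finally have "(\<Sum>B\<in>Pow (insert a U). (2::real) ^ agr (insert a U) C B) = 3 * (\<Sum>B\<in>Pow U. (2::real) ^ agr U C B)"
    by (cases "a \<in> C") (simp_all add: sum.distrib[symmetric] sum_distrib_left)
  then show ?case using insert by simp
qed

lemma count_bound:
  assumes "finite U"
  shows "real (card {B\<in>Pow U. T \<le> agr U C B}) * 2 ^ T \<le> 3 ^ card U"
proof -
  have fin: "finite (Pow U)" using assms by simp
  have "real (card {B\<in>Pow U. T \<le> agr U C B}) * 2 ^ T = (\<Sum>B\<in>{B\<in>Pow U. T \<le> agr U C B}. (2::real) ^ T)"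
    by simp
  also have "\<dots> \<le> (\<Sum>B\<in>{B\<in>Pow U. T \<le> agr U C B}. (2::real) ^ agr U C B)"
    by (intro sum_mono) (auto intro: power_increasing)
  also have "\<dots> \<le> (\<Sum>B\<in>Pow U. (2::real) ^ agr U C B)"
    using fin by (intro sum_mono2) auto
  finally show ?thesis using pow_sum[OF assms] by simp
qed

lemma main_count:
  fixes \<sigma> :: "nat set \<Rightarrow> 'b" and dec :: "'b \<Rightarrow> nat set"
  assumes "finite U" "finite S" "\<sigma> ` Pow U \<subseteq> S" "card S \<le> K"
  shows "(\<Sum>B\<in>Pow U. real (agr U (dec (\<sigma> B)) B))
     \<le> real T * 2 ^ card U + real (card U) * real K * 3 ^ card U / 2 ^ T"
proof -
  define ind where "ind s B = (if T \<le> agr U (dec s) B then (1::real) else 0)" for s B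
  have fin: "finite (Pow U)" using assms by simp
  have pt: "real (agr U (dec (\<sigma> B)) B) \<le> real T + real (card U) * (\<Sum>s\<in>S. ind s B)" if "B \<in> Pow U" for B
  proof (cases "T \<le> agr U (dec (\<sigma> B)) B")
    case True
    have "\<sigma> B \<in> S" using assms that by auto
    then have "ind (\<sigma> B) B \<le> (\<Sum>s\<in>S. ind s B)"
      using assms(2) by (intro member_le_sum) (auto simp: ind_def)
    then have "1 \<le> (\<Sum>s\<in>S. ind s B)" using True by (simp add: ind_def)
    moreover have "real (agr U (dec (\<sigma> B)) B) \<le> real (card U)" using agr_le[OF assms(1)] by simp
    moreover have "real (card U) * 1 \<le> real (card U) * (\<Sum>s\<in>S. ind s B)"
      using \<open>1 \<le> (\<Sum>s\<in>S. ind s B)\<close> by (intro mult_left_mono) auto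
    ultimately show ?thesis by simp
  next
    case False
    have "0 \<le> (\<Sum>s\<in>S. ind s B)" by (intro sum_nonneg) (auto simp: ind_def)
    then have "0 \<le> real (card U) * (\<Sum>s\<in>S. ind s B)" by simp
    then show ?thesis using False by linarith
  qed
  have "(\<Sum>B\<in>Pow U. real (agr U (dec (\<sigma> B)) B)) \<le> (\<Sum>B\<in>Pow U. real T + real (card U) * (\<Sum>s\<in>S. ind s B))"
    using pt by (intro sum_mono) auto
  also have "\<dots> = real T * 2 ^ card U + real (card U) * (\<Sum>s\<in>S. \<Sum>B\<in>Pow U. ind s B)"
    using assms(1) by (simp add: sum.distrib sum_distrib_left[symmetric] sum.swap[of _ S] card_Pow mult.commute)
  also have "(\<Sum>s\<in>S. \<Sum>B\<in>Pow U. ind s B) \<le> (\<Sum>s\<in>S. 3 ^ card U / 2 ^ T)"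
  proof (intro sum_mono)
    fix s assume "s \<in> S"
    have "(\<Sum>B\<in>Pow U. ind s B) = real (card {B\<in>Pow U. T \<le> agr U (dec s) B})"
      unfolding ind_def using fin by (simp add: sum.If_cases Int_def)
    also have "\<dots> \<le> 3 ^ card U / 2 ^ T"
      using count_bound[OF assms(1), of T "dec s"] by (simp add: field_simps)
    finally show "(\<Sum>B\<in>Pow U. ind s B) \<le> 3 ^ card U / 2 ^ T" .
  qed
  also have "(\<Sum>s\<in>S. (3::real) ^ card U / 2 ^ T) \<le> real K * 3 ^ card U / 2 ^ T"
    using assms(4) by (simp add: divide_right_mono)
  finally show ?thesis
    by (smt (verit, ccfv_SIG) mult_left_mono of_nat_0_le_iff mult.assoc times_divide_eq_right)
qed



lemma prob_sum_bound:
  fixes p :: "'a pmf" and E :: "'i \<Rightarrow> 'a set"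
  assumes "finite I" "\<And>r. r \<in> set_pmf p \<Longrightarrow> (\<Sum>j\<in>I. indicator (E j) r) \<le> (c::real)"
  shows "(\<Sum>j\<in>I. measure_pmf.prob p (E j)) \<le> c"
proof -
  have int: "integrable (measure_pmf p) (indicat_real (E j))" for j
    by (intro integrable_real_indicator) (auto simp: measure_pmf.emeasure_finite less_top[symmetric])
  have "(\<Sum>j\<in>I. measure_pmf.prob p (E j)) = (\<Sum>j\<in>I. measure_pmf.expectation p (indicator (E j)))"
    by simp
  also have "\<dots> = measure_pmf.expectation p (\<lambda>r. \<Sum>j\<in>I. indicator (E j) r)"
    by (subst Bochner_Integration.integral_sum) (auto intro: int)
  also have "\<dots> \<le> c"
  proof (rule measure_pmf.integral_le_const)
    show "integrable (measure_pmf p) (\<lambda>r. \<Sum>j\<in>I. indicat_real (E j) r)"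
      by (rule Bochner_Integration.integrable_sum) (rule int)
    show "AE x in measure_pmf p. (\<Sum>j\<in>I. indicat_real (E j) x) \<le> c"
      using assms(2) by (simp add: AE_measure_pmf_iff)
  qed
  finally show ?thesis .
qed



lemma freq_append: "freq (xs @ ys) j = freq xs j + freq ys j"
  by (simp add: freq_def)

lemma freq_single: "freq [(k, c)] j = (if k = j then c else 0)"
  by (simp add: freq_def)

lemma freq_nil: "freq [] j = 0" by (simp add: freq_def)

lemma freq_blk: "freq (map (\<lambda>k. (k, c)) (filter Q [0..<N])) j = (if j < N \<and> Q j then c else 0)"
  by (induction N) (auto simp: freq_append freq_single freq_nil)

lemma freq_nonneg: "\<forall>u\<in>set D. snd u \<ge> 0 \<Longrightarrow> freq D j \<ge> 0"
  unfolding freq_def by (intro sum_list_nonneg) auto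

lemma freq_take: 
  assumes "\<forall>u\<in>set D. snd u \<ge> 0"
  shows "0 \<le> freq (take k D) j \<and> freq (take k D) j \<le> freq D j"
proof -
  have "freq D j = freq (take k D) j + freq (drop k D) j"
    by (metis append_take_drop_id freq_append)
  moreover have "freq (take k D) j \<ge> 0" using assms by (intro freq_nonneg) (auto dest: in_set_takeD)
  moreover have "freq (drop k D) j \<ge> 0" using assms by (intro freq_nonneg) (auto dest: in_set_dropD)
  ultimately show ?thesis by simp
qed

definition Pst :: "nat set \<Rightarrow> nat \<Rightarrow> nat \<Rightarrow> stream" where
  "Pst B N y = map (\<lambda>k. (k, int y)) (filter (\<lambda>k. k \<in> B) [0..<N])"

lemma freq_D: "freq (Pst B N y @ [(i, int x)]) j = (if j < N \<and> j \<in> B then int y else 0) + (if i = j then int x else 0)"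
  by (simp add: Pst_def freq_append freq_blk freq_single)

lemma D_in_streams:
  assumes "i < N" "x + y \<le> M"
  shows "Pst B N y @ [(i, int x)] \<in> streams N M (N + 1)"
proof -
  let ?D = "Pst B N y @ [(i, int x)]"
  have len: "length ?D \<le> N + 1"
    unfolding Pst_def by simp (metis length_filter_le length_upt diff_zero)
  have fst: "\<forall>u\<in>set ?D. fst u < N" using assms(1) by (auto simp: Pst_def)
  have nn: "\<forall>u\<in>set ?D. snd u \<ge> 0" by (auto simp: Pst_def)
  have "\<bar>freq (take k ?D) j\<bar> \<le> int M" for k j
  proof -
    have "0 \<le> freq (take k ?D) j \<and> freq (take k ?D) j \<le> freq ?D j" using freq_take[OF nn] .
    moreover have "freq ?D j \<le> int M" using assms(2) unfolding freq_D by auto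
    ultimately show ?thesis by auto
  qed
  then show ?thesis unfolding streams_def using len fst by auto
qed

lemma gsum_D:
  "gsum F N (Pst B N y @ [(i, int x)]) = (\<Sum>j<N. F ((if j \<in> B then y else 0) + (if i = j then x else 0)))"
  unfolding gsum_def freq_D by (intro sum.cong refl) (auto simp: nat_add_distrib)

lemma gsum_lower:
  assumes "\<And>z. F z \<ge> 0" "i < N" "i \<in> B"
  shows "gsum F N (Pst B N y @ [(i, int x)]) \<ge> F (x + y)"
proof -
  have "F (x + y) = (\<lambda>j. F ((if j \<in> B then y else 0) + (if i = j then x else 0))) i"
    using assms by (simp add: add.commute)
  also have "\<dots> \<le> (\<Sum>j<N. F ((if j \<in> B then y else 0) + (if i = j then x else 0)))"
    using assms by (intro member_le_sum) auto
  finally show ?thesis by (simp add: gsum_D)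
qed

lemma gsum_upper:
  assumes "\<And>z. F z \<ge> 0" "F 0 = 0" "i < N" "i \<notin> B"
  shows "gsum F N (Pst B N y @ [(i, int x)]) \<le> F x + real N * F y"
proof -
  have "(\<Sum>j<N. F ((if j \<in> B then y else 0) + (if i = j then x else 0))) \<le> (\<Sum>j<N. (if i = j then F x else 0) + F y)"
    using assms by (intro sum_mono) auto
  also have "\<dots> = F x + real N * F y" using assms(3) by (simp add: sum.distrib)
  finally show ?thesis by (simp add: gsum_D)
qed

lemma gsum_nonneg: "(\<And>z. F z \<ge> 0) \<Longrightarrow> gsum F N D \<ge> 0"
  unfolding gsum_def by (intro sum_nonneg) auto

lemma run_D: "run A r (Pst B N y @ [(i, int x)]) = step A r (run A r (Pst B N y)) (i, int x)"
  by (simp add: run_def)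




lemma card_short_lists: "card {xs::bool list. set xs \<subseteq> UNIV \<and> length xs \<le> n} \<le> 2 ^ (n + 1)"
proof -
  have "card {xs::bool list. set xs \<subseteq> UNIV \<and> length xs \<le> n} = (\<Sum>j\<le>n. 2 ^ j)"
    by (subst card_lists_length_le) (auto simp: card_UNIV_bool)
  also have "\<dots> \<le> 2 ^ (n + 1)"
    by (induction n) auto
  finally show ?thesis .
qed

lemma lower_bound:
  fixes F :: "nat \<Rightarrow> real" and A :: alg1
  assumes Fnn: "\<And>z. F z \<ge> 0" and F0: "F 0 = 0"
    and N: "N = 5 * k" and k: "k \<ge> 1"
    and xyM: "x + y \<le> M"
    and eps: "0 < eps" "eps \<le> 1"
    and key: "(1 + eps) * (F x + real N * F y) < (1 - eps) * F (x + y)"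
    and sol: "solves A F eps N (streams N M (N + 1))"
    and sp: "space_le A (streams N M (N + 1)) s"
  shows "(256::real) ^ k \<le> 15 * 2 ^ (nat \<lfloor>s\<rfloor> + 1) * 243 ^ k"
proof -
  define U where "U = {..<N}"
  define \<tau> where "\<tau> = (1 + eps) * (F x + real N * F y)"
  define D where "D B i = Pst B N y @ [(i, int x)]" for B i
  define E where "E = (\<lambda>(B, i). {r. (\<tau> < out A r (run A r (D B i))) = (i \<in> B)})"
  define I where "I = Pow U \<times> U"
  define S where "S = {xs::bool list. set xs \<subseteq> UNIV \<and> length xs \<le> nat \<lfloor>s\<rfloor>}"
  define K where "K = (2::nat) ^ (nat \<lfloor>s\<rfloor> + 1)"
  define T where "T = 3 * k"
  have finU: "finite U" and cardU: "card U = N" by (auto simp: U_def)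
  have finI: "finite I" using finU by (simp add: I_def)
  have cardI: "card I = 2 ^ N * N" using finU cardU by (simp add: I_def card_cartesian_product card_Pow)
  have finS: "finite S" unfolding S_def by (rule finite_lists_length_le) simp
  have cardS: "card S \<le> K" unfolding S_def K_def by (rule card_short_lists)
  have Dst: "D B i \<in> streams N M (N + 1)" if "i \<in> U" for B i
    unfolding D_def using that xyM by (intro D_in_streams) (auto simp: U_def)
  have pE: "measure_pmf.prob (seed A) (E j) \<ge> 2/3" if "j \<in> I" for j
  proof -
    obtain B i where j: "j = (B, i)" by (cases j)
    have iU: "i \<in> U" using that j by (auto simp: I_def)
    let ?G = "{r. (1 - eps) * gsum F N (D B i) \<le> out A r (run A r (D B i))
          \<and> out A r (run A r (D B i)) \<le> (1 + eps) * gsum F N (D B i)}"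
    have "2/3 \<le> measure_pmf.prob (seed A) ?G" using sol Dst[OF iU] unfolding solves_def by blast
    also have "\<dots> \<le> measure_pmf.prob (seed A) (E j)"
    proof (rule measure_pmf.finite_measure_mono)
      show "E j \<in> sets (measure_pmf (seed A))" by simp
      show "?G \<subseteq> E j"
      proof
        fix r assume r: "r \<in> ?G"
        show "r \<in> E j"
        proof (cases "i \<in> B")
          case True
          have "F (x + y) \<le> gsum F N (D B i)" unfolding D_def
            using Fnn iU True by (intro gsum_lower) (auto simp: U_def)
          then have "(1 - eps) * F (x + y) \<le> (1 - eps) * gsum F N (D B i)"
            using eps by (intro mult_left_mono) auto
          then show ?thesis using r True key unfolding E_def j \<tau>_def by auto
        next
          case False
          have "gsum F N (D B i) \<le> F x + real N * F y" unfolding D_def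
            using Fnn F0 iU False by (intro gsum_upper) (auto simp: U_def)
          then have "(1 + eps) * gsum F N (D B i) \<le> \<tau>"
            unfolding \<tau>_def using eps by (intro mult_left_mono) auto
          then show ?thesis using r False unfolding E_def j by auto
        qed
      qed
    qed
    finally show ?thesis .
  qed
  have lowsum: "(2/3) * (2 ^ N * real N) \<le> (\<Sum>j\<in>I. measure_pmf.prob (seed A) (E j))"
  proof -
    have "(\<Sum>j\<in>I. (2/3::real)) \<le> (\<Sum>j\<in>I. measure_pmf.prob (seed A) (E j))"
      using pE by (intro sum_mono) auto
    then show ?thesis using cardI by simp
  qed
  have ptw: "(\<Sum>j\<in>I. indicator (E j) r) \<le> real T * 2 ^ N + real N * real K * 3 ^ N / 2 ^ T"
    if r: "r \<in> set_pmf (seed A)" for r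
  proof -
    define \<sigma> where "\<sigma> B = run A r (Pst B N y)" for B
    define dec where "dec st = {i. \<tau> < out A r (step A r st (i, int x))}" for st
    have img: "\<sigma> ` Pow U \<subseteq> S"
    proof
      fix st assume "st \<in> \<sigma> ` Pow U"
      then obtain B where B: "B \<subseteq> U" "st = \<sigma> B" by auto
      have "0 \<in> U" using N k by (simp add: U_def)
      then have Din: "D B 0 \<in> streams N M (N + 1)" by (rule Dst)
      have "length (Pst B N y) \<le> length (D B 0)" by (simp add: D_def)
      then have "real (length (run A r (take (length (Pst B N y)) (D B 0)))) \<le> s"
        using sp Din r unfolding space_le_def by blast
      then have "real (length st) \<le> s" by (simp add: B D_def \<sigma>_def)
      then have "length st \<le> nat \<lfloor>s\<rfloor>" by linarith
      then show "st \<in> S" by (simp add: S_def)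
    qed
    have "(\<Sum>j\<in>I. indicator (E j) r) = (\<Sum>B\<in>Pow U. \<Sum>i\<in>U. indicator (E (B, i)) r)"
      unfolding I_def by (simp add: sum.cartesian_product)
    also have "\<dots> = (\<Sum>B\<in>Pow U. real (agr U (dec (\<sigma> B)) B))"
    proof (intro sum.cong refl)
      fix B assume "B \<in> Pow U"
      have "(\<Sum>i\<in>U. indicator (E (B, i)) r) = (\<Sum>i\<in>U. if (i \<in> dec (\<sigma> B)) = (i \<in> B) then 1 else (0::real))"
        by (intro sum.cong refl) (simp add: E_def dec_def \<sigma>_def D_def run_D indicator_def)
      also have "\<dots> = real (agr U (dec (\<sigma> B)) B)"
        using finU by (simp add: sum.If_cases agr_def Int_def)
      finally show "(\<Sum>i\<in>U. indicator (E (B, i)) r) = real (agr U (dec (\<sigma> B)) B)" .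
    qed
    also have "\<dots> \<le> real T * 2 ^ card U + real (card U) * real K * 3 ^ card U / 2 ^ T"
      by (rule main_count[OF finU finS img cardS])
    finally show ?thesis using cardU by simp
  qed
  have "(\<Sum>j\<in>I. measure_pmf.prob (seed A) (E j)) \<le> real T * 2 ^ N + real N * real K * 3 ^ N / 2 ^ T"
    by (rule prob_sum_bound[OF finI ptw])
  with lowsum have ineq: "(2/3) * (2 ^ N * real N) \<le> real T * 2 ^ N + real N * real K * 3 ^ N / 2 ^ T"
    by linarith
  have p1: "(2::real) ^ N = 32 ^ k" and p2: "(3::real) ^ N = 243 ^ k" and p3: "(2::real) ^ T = 8 ^ k"
    by (simp_all add: N T_def power_mult)
  have "(2/3) * (32 ^ k * (5 * real k)) \<le> 3 * real k * 32 ^ k + 5 * real k * real K * 243 ^ k / 8 ^ k"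
    using ineq unfolding p1 p2 p3 by (simp add: N T_def)
  then have "(1/3) * real k * 32 ^ k \<le> 5 * real k * real K * 243 ^ k / 8 ^ k"
    by (simp add: algebra_simps)
  then have "(1/3) * 32 ^ k * 8 ^ k \<le> 5 * real K * 243 ^ k"
    using k by (simp add: field_simps)
  moreover have "(32::real) ^ k * 8 ^ k = 256 ^ k" by (simp add: power_mult_distrib[symmetric])
  ultimately show ?thesis by (simp add: K_def)
qed



lemma powr_ge_lin:
  fixes t e :: real
  assumes "0 < t" "t \<le> 1" "0 < e"
  shows "(1 + t) powr e \<ge> 1 + e * t / 2"
proof -
  have "ln (1 / (1 + t)) \<le> 1 / (1 + t) - 1" using assms by (intro ln_le_minus_one) auto
  then have l1: "ln (1 + t) \<ge> t / (1 + t)" using assms by (simp add: ln_div field_simps)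
  have "t / (1 + t) \<ge> t / 2" using assms by (intro divide_left_mono) auto
  with l1 have l2: "ln (1 + t) \<ge> t / 2" by linarith
  have "(1 + t) powr e = exp (e * ln (1 + t))" using assms by (simp add: powr_def)
  also have "\<dots> \<ge> 1 + e * ln (1 + t)" by (rule exp_ge_add_one_self)
  finally have "(1 + t) powr e \<ge> 1 + e * ln (1 + t)" .
  moreover have "e * ln (1 + t) \<ge> e * (t / 2)" using l2 assms by (intro mult_left_mono) auto
  ultimately show ?thesis by simp
qed

lemma key_ineq:
  fixes G Lx gxy Lxy Fy eps d e Nr :: real
  assumes G: "G > 0" and Lx: "Lx \<ge> 1" and d: "0 < d" "d \<le> 1/20"
    and e: "e > 0"
    and gxy: "G \<le> gxy * (1 + d)" "gxy \<ge> 0"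
    and Lxy: "Lxy powr e \<ge> Lx powr e * (1 + 10 * d)"
    and NFy: "Nr * Fy \<le> d * (G * Lx powr e)" "Nr * Fy \<ge> 0"
    and eps: "0 < eps" "eps \<le> d"
  shows "(1 + eps) * (G * Lx powr e + Nr * Fy) < (1 - eps) * (gxy * Lxy powr e)"
proof -
  define P where "P = G * Lx powr e"
  have LP: "Lx powr e \<ge> 1" using Lx e by (simp add: ge_one_powr_ge_zero)
  have P: "P > 0" unfolding P_def using G LP by (intro mult_pos_pos) auto
  have l: "(1 + eps) * (P + Nr * Fy) \<le> (1 + d) * ((1 + d) * P)"
  proof -
    have "P + Nr * Fy \<le> (1 + d) * P" using NFy by (simp add: P_def algebra_simps)
    moreover have "0 \<le> P + Nr * Fy" using P NFy by simp
    ultimately show ?thesis using eps by (intro mult_mono) auto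
  qed
  have gl: "gxy \<ge> G / (1 + d)" using gxy d by (simp add: field_simps)
  have r1: "gxy * Lxy powr e \<ge> (G / (1 + d)) * (Lx powr e * (1 + 10 * d))"
    using gl Lxy G d LP gxy(2) by (intro mult_mono) auto
  have r: "(1 - eps) * (gxy * Lxy powr e) \<ge> (1 - d) * ((G / (1 + d)) * (Lx powr e * (1 + 10 * d)))"
  proof -
    have Y: "0 \<le> (G / (1 + d)) * (Lx powr e * (1 + 10 * d))" using G d LP by simp
    have "(1 - d) * ((G / (1 + d)) * (Lx powr e * (1 + 10 * d))) \<le> (1 - eps) * ((G / (1 + d)) * (Lx powr e * (1 + 10 * d)))"
      using Y eps by (intro mult_right_mono) auto
    also have "\<dots> \<le> (1 - eps) * (gxy * Lxy powr e)"
      using r1 eps d by (intro mult_left_mono) auto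
    finally show ?thesis .
  qed
  have "(1 - d) * ((G / (1 + d)) * (Lx powr e * (1 + 10 * d))) = P * ((1 - d) * (1 + 10 * d) / (1 + d))"
    using d by (simp add: P_def field_simps)
  moreover have "(1 + d) * ((1 + d) * P) < P * ((1 - d) * (1 + 10 * d) / (1 + d))"
  proof -
    have h1: "d * d \<le> d * (1/20)" using d by (intro mult_left_mono) auto
    have h2: "d * d * d \<le> d * d * (1/20)" using d by (intro mult_left_mono) auto
    have e1: "(1 + d) * (1 + d) * (1 + d) = 1 + 3 * d + 3 * (d * d) + d * d * d" by (simp add: algebra_simps)
    have e2: "(1 - d) * (1 + 10 * d) = 1 + 9 * d - 10 * (d * d)" by (simp add: algebra_simps)
    have "(1 + d) * (1 + d) * (1 + d) < (1 - d) * (1 + 10 * d)" unfolding e1 e2 using h1 h2 d by linarith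
    then have "(1 + d) * (1 + d) < (1 - d) * (1 + 10 * d) / (1 + d)" using d by (simp add: field_simps)
    then have "P * ((1 + d) * (1 + d)) < P * ((1 - d) * (1 + 10 * d) / (1 + d))"
      using P by (rule mult_strict_left_mono)
    then show ?thesis by (simp add: mult.commute mult.left_commute)
  qed
  ultimately show ?thesis using l r unfolding P_def by linarith
qed



lemma hp_classS:
  assumes c: "c > 0"
  shows "(\<lambda>z::nat. c / (10 * log 2 (2 + real z))) \<in> class_S"
proof -
  have anti: "antimono (\<lambda>z::nat. c / (10 * log 2 (2 + real z)))"
  proof (rule antimonoI)
    fix z w :: nat assume "z \<le> w"
    have "log 2 (2 + real z) \<le> log 2 (2 + real w)" using \<open>z \<le> w\<close> by simp
    moreover have "log 2 (2 + real z) > 0" by simp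
    ultimately show "c / (10 * log 2 (2 + real w)) \<le> c / (10 * log 2 (2 + real z))"
      using c by (intro divide_left_mono) auto
  qed
  have nn: "\<forall>z::nat. c / (10 * log 2 (2 + real z)) \<ge> 0" using c by simp
  have l1: "filterlim (\<lambda>x::nat. real x powr a * (c / (10 * log 2 (2 + real x)))) at_top sequentially" if "a > 0" for a
  proof -
    have "filterlim (\<lambda>x::real. x powr a * (c / (10 * log 2 (2 + x)))) at_top at_top" using that c by real_asymp
    then show ?thesis by (rule filterlim_compose[OF _ filterlim_real_sequentially])
  qed
  have l2: "((\<lambda>x::nat. real x powr (-a) * (c / (10 * log 2 (2 + real x)))) \<longlongrightarrow> 0) sequentially" if "a > 0" for a
  proof -
    have "((\<lambda>x::real. x powr (-a) * (c / (10 * log 2 (2 + x)))) \<longlongrightarrow> 0) at_top" using that c by real_asymp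
    then show ?thesis by (rule filterlim_compose[OF _ filterlim_real_sequentially])
  qed
  show ?thesis unfolding class_S_def using anti nn l1 l2 by auto
qed

lemma h_subpoly:
  assumes c: "c > 0"
  shows "sub_polynomial (\<lambda>t. (10 / c) * log 2 (1 + t))"
proof -
  have "\<forall>x\<ge>0. (10 / c) * log 2 (1 + x) \<ge> 0" using c by simp
  moreover have "filterlim (\<lambda>x::real. x powr a * ((10 / c) * log 2 (1 + x))) at_top at_top" if "a > 0" for a
    using that c by real_asymp
  moreover have "((\<lambda>x::real. x powr (-a) * ((10 / c) * log 2 (1 + x))) \<longlongrightarrow> 0) at_top" if "a > 0" for a
    using that c by real_asymp
  ultimately show ?thesis unfolding sub_polynomial_def by auto
qed



lemma ev2:
  assumes "a > 0" "c > 0"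
  shows "eventually (\<lambda>y::nat. real y powr (-a/2) * log 2 (1 + real y) powr (e + 1) \<le> c / 50) sequentially"
proof -
  have "((\<lambda>x::real. x powr (-a/2) * log 2 (1 + x) powr (e+1)) \<longlongrightarrow> 0) at_top" using assms by real_asymp
  then have "((\<lambda>y::nat. real y powr (-a/2) * log 2 (1 + real y) powr (e+1)) \<longlongrightarrow> 0) sequentially"
    by (rule filterlim_compose[OF _ filterlim_real_sequentially])
  from order_tendstoD(2)[OF this, of "c/50"] assms show ?thesis
    by (auto elim: eventually_mono)
qed

lemma ev4:
  assumes "a > 0"
  shows "eventually (\<lambda>y::nat. C2 * real y powr (a/4) + C3 < (real y powr (a/2) - 1) * ln (256/243)) sequentially"
proof -
  have C1: "ln (256/243::real) > 0" by (intro ln_gt_zero) simp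
  have "filterlim (\<lambda>x::real. (x powr (a/2) - 1) * C1' - C2 * x powr (a/4) - C3) at_top at_top" if "C1' > 0" for C1'
    using assms that by real_asymp
  from this[OF C1] have "filterlim (\<lambda>y::nat. (real y powr (a/2) - 1) * ln (256/243) - C2 * real y powr (a/4) - C3) at_top sequentially"
    by (rule filterlim_compose[OF _ filterlim_real_sequentially])
  then have "eventually (\<lambda>y::nat. 1 \<le> (real y powr (a/2) - 1) * ln (256/243) - C2 * real y powr (a/4) - C3) sequentially"
    by (simp add: filterlim_at_top)
  then show ?thesis by (auto elim: eventually_mono)
qed

lemma ev3:
  assumes hs: "sub_polynomial hs" and d: "\<delta> > 0" and tt: "filterlim tt at_top F"
  shows "eventually (\<lambda>y. hs (tt y) \<le> tt y powr \<delta>) F"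
proof -
  have "((\<lambda>x. x powr (-\<delta>) * hs x) \<longlongrightarrow> 0) at_top" using hs d unfolding sub_polynomial_def by auto
  from order_tendstoD(2)[OF this, of 1] have e1: "eventually (\<lambda>x. x powr (-\<delta>) * hs x < 1) at_top" by simp
  have "eventually (\<lambda>x::real. hs x \<le> x powr \<delta>) at_top"
    using e1 eventually_gt_at_top[of 0]
  proof eventually_elim
    case (elim x)
    have "hs x = x powr \<delta> * (x powr (-\<delta>) * hs x)" using elim by (simp add: powr_minus field_simps)
    also have "\<dots> \<le> x powr \<delta> * 1" using elim by (intro mult_left_mono) auto
    finally show ?case by simp
  qed
  then show ?thesis using tt by (rule eventually_compose_filterlim)
qed



lemma main_L:
  fixes g :: "nat \<Rightarrow> real"
  assumes gG: "g \<in> class_G" and np: "nearly_periodic class_S g" and eta: "\<eta> > 0"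
  shows "\<not> one_pass_tractable (L_eta \<eta> g)"
proof
  assume tr: "one_pass_tractable (L_eta \<eta> g)"
  define F where "F = L_eta \<eta> g"
  have g0: "g 0 = 0" and gpos: "\<And>z. z > 0 \<Longrightarrow> g z > 0" using gG by (auto simp: class_G_def)
  have gnn: "g z \<ge> 0" for z using g0 gpos[of z] by (cases "z = 0") auto
  have Fnn: "F z \<ge> 0" for z using gnn by (simp add: F_def L_eta_def)
  have F0: "F 0 = 0" using g0 by (simp add: F_def L_eta_def)
  obtain a where a: "a > 0" and per: "\<forall>N>0. \<exists>x y::nat. x < y \<and> real y \<ge> N \<and> g y \<le> g x / real y powr a"
    using np unfolding nearly_periodic_def by blast
  define c where "c = min \<eta> 1 / 2"
  have c: "c > 0" "c \<le> 1/2" "c \<le> \<eta> / 2" using eta by (auto simp: c_def)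
  define hp where "hp z = c / (10 * log 2 (2 + real z))" for z :: nat
  have hpS: "hp \<in> class_S" unfolding hp_def by (rule hp_classS[OF c(1)])
  obtain N1 where N1: "N1 > 0" and N1p: "\<forall>y x. is_period g a y \<and> real y \<ge> N1 \<and> x < y \<and> g y * real y powr a \<le> g x \<longrightarrow>
         \<bar>g (x + y) - g x\<bar> \<le> min (g x) (g (x + y)) * hp y"
    using np a hpS unfolding nearly_periodic_def by blast
  define h where "h t = (10 / c) * log 2 (1 + t)" for t :: real
  have hsub: "sub_polynomial h" unfolding h_def by (rule h_subpoly[OF c(1)])
  obtain hs where hs: "sub_polynomial hs" and hsA: "\<forall>n M m eps. n \<ge> 1 \<longrightarrow> M \<ge> 1 \<longrightarrow> eps > 0 \<longrightarrow> eps \<ge> 1 / h (real n * real M) \<longrightarrow>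
        (\<exists>A. solves A F eps n (streams n M m) \<and> space_le A (streams n M m) (hs (real n * real M)))"
    using tr hsub unfolding one_pass_tractable_def F_def by blast
  define \<delta> where "\<delta> = a / (4 + 2 * a)"
  have \<delta>: "\<delta> > 0" using a by (simp add: \<delta>_def)
  define kk where "kk y = nat \<lfloor>real y powr (a/2)\<rfloor>" for y :: nat
  define tt where "tt y = real (5 * kk y) * real (2 * y)" for y :: nat
  have kk1: "kk y \<ge> 1" if "y \<ge> 1" for y
  proof -
    have "real y powr (a/2) \<ge> 1" using that a by (simp add: ge_one_powr_ge_zero)
    then show ?thesis by (simp add: kk_def le_nat_floor)
  qed
  have tty: "tt y \<ge> real y" if "y \<ge> 1" for y
  proof -
    have "real (5 * kk y) \<ge> 1" using kk1[OF that] by simp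
    then have "real (5 * kk y) * real (2 * y) \<ge> 1 * real (2 * y)" by (intro mult_right_mono) auto
    then have "tt y \<ge> real (2 * y)" unfolding tt_def by simp
    then show ?thesis by simp
  qed
  have ttlim: "filterlim tt at_top sequentially"
    by (rule filterlim_at_top_mono[OF filterlim_real_sequentially])
       (use tty in \<open>auto simp: eventually_sequentially\<close>)
  have E: "eventually (\<lambda>y. real y \<ge> N1 \<and> y \<ge> 1
      \<and> real y powr (-a/2) * log 2 (1 + real y) powr (\<eta> + 1) \<le> c / 50
      \<and> hs (tt y) \<le> tt y powr \<delta>
      \<and> ln 2 * 10 powr \<delta> * real y powr (a/4) + ln 30 < (real y powr (a/2) - 1) * ln (256/243)) sequentially"
  proof -
    have "eventually (\<lambda>y::nat. real y \<ge> N1) sequentially"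
      by (rule filterlim_real_sequentially[unfolded filterlim_at_top, rule_format])
    moreover have "eventually (\<lambda>y::nat. y \<ge> 1) sequentially" by (rule eventually_ge_at_top)
    moreover note ev2[OF a c(1), of \<eta>]
    moreover note ev3[OF hs \<delta> ttlim]
    moreover note ev4[OF a, of "ln 2 * 10 powr \<delta>" "ln 30"]
    ultimately show ?thesis by eventually_elim auto
  qed
  then obtain Y0 where Y0: "\<And>y. y \<ge> Y0 \<Longrightarrow> real y \<ge> N1 \<and> y \<ge> 1
      \<and> real y powr (-a/2) * log 2 (1 + real y) powr (\<eta> + 1) \<le> c / 50
      \<and> hs (tt y) \<le> tt y powr \<delta>
      \<and> ln 2 * 10 powr \<delta> * real y powr (a/4) + ln 30 < (real y powr (a/2) - 1) * ln (256/243)"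
    unfolding eventually_sequentially by blast
  obtain x y :: nat where xy: "x < y" "real y \<ge> real (max Y0 1)" and gy: "g y \<le> g x / real y powr a"
  proof -
    have "real (max Y0 1) > 0" by simp
    then show ?thesis using per that by blast
  qed
  have yY: "y \<ge> Y0" using xy by simp
  note Yp = Y0[OF yY]
  have y1: "y \<ge> 1" using Yp by simp

  have ypos: "real y > 0" using y1 by simp
  have ya: "real y powr a > 0" using ypos by simp
  have gyp: "g y > 0" using gpos y1 by simp
  have gya: "g y * real y powr a \<le> g x" using gy ya by (simp add: pos_le_divide_eq)
  have gx: "g x > 0" using gya gyp ya by (smt (verit) mult_pos_pos)
  have x1: "x \<ge> 1" using gx g0 by (cases x) auto
  have isp: "is_period g a y" unfolding is_period_def using xy gy by blast
  have ab: "\<bar>g (x + y) - g x\<bar> \<le> min (g x) (g (x + y)) * hp y"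
    using N1p isp Yp xy gya by blast
  have hp0: "hp y \<ge> 0" using c by (simp add: hp_def)
  have gxy0: "g x \<le> g (x + y) * (1 + hp y)"
  proof -
    have "min (g x) (g (x + y)) * hp y \<le> g (x + y) * hp y" using hp0 by (intro mult_right_mono) auto
    then show ?thesis using ab by (simp add: algebra_simps)
  qed
  define Ly where "Ly = log 2 (1 + real y)"
  define Lx where "Lx = log 2 (1 + real x)"
  define Lxy where "Lxy = log 2 (1 + real (x + y))"
  have Ly1: "Ly \<ge> 1" unfolding Ly_def using y1 by simp
  have Lx1: "Lx \<ge> 1" unfolding Lx_def using x1 by simp
  have LxLy: "Lx \<le> Ly" unfolding Lx_def Ly_def using xy by simp
  have Lxy1: "Lxy \<ge> Lx + 1"
  proof -
    have "2 * (1 + real x) \<le> 1 + real (x + y)" using xy by simp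
    then have "log 2 (2 * (1 + real x)) \<le> Lxy" unfolding Lxy_def
      by (subst log_le_cancel_iff) auto
    moreover have "log 2 (2 * (1 + real x)) = 1 + Lx" unfolding Lx_def
      by (subst log_mult) (auto simp del: distrib_left_numeral)
    ultimately show ?thesis by simp
  qed
  define d where "d = c / (10 * Ly)"
  have d0: "d > 0" using c Ly1 by (simp add: d_def)
  have d1: "d \<le> 1/20"
  proof -
    have "c / (10 * Ly) \<le> (1/2) / (10 * 1)" using c Ly1 by (intro frac_le) auto
    then show ?thesis by (simp add: d_def)
  qed
  have hpd: "hp y \<le> d"
  proof -
    have "Ly \<le> log 2 (2 + real y)" unfolding Ly_def by simp
    then show ?thesis unfolding hp_def d_def using c Ly1 by (intro divide_left_mono) auto
  qed
  have gxy: "g x \<le> g (x + y) * (1 + d)"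
  proof -
    have "g (x + y) * (1 + hp y) \<le> g (x + y) * (1 + d)" using hpd gnn by (intro mult_left_mono) auto
    then show ?thesis using gxy0 by linarith
  qed
  have Lxyp: "Lxy powr \<eta> \<ge> Lx powr \<eta> * (1 + 10 * d)"
  proof -
    have "(Lx + 1) powr \<eta> \<le> Lxy powr \<eta>" using Lxy1 Lx1 eta by (intro powr_mono2) auto
    moreover have "(Lx + 1) powr \<eta> = Lx powr \<eta> * (1 + 1 / Lx) powr \<eta>"
    proof -
      have "Lx + 1 = Lx * (1 + 1 / Lx)" using Lx1 by (simp add: field_simps)
      then show ?thesis using Lx1 by (simp add: powr_mult)
    qed
    moreover have "(1 + 1 / Lx) powr \<eta> \<ge> 1 + 10 * d"
    proof -
      have "(1 + 1 / Lx) powr \<eta> \<ge> 1 + \<eta> * (1 / Lx) / 2" using Lx1 eta by (intro powr_ge_lin) auto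
      moreover have "\<eta> * (1 / Lx) / 2 \<ge> 10 * d"
      proof -
        have "10 * d = c / Ly" using Ly1 by (simp add: d_def)
        also have "\<dots> \<le> (\<eta> / 2) / Ly" using c Ly1 by (intro divide_right_mono) auto
        also have "\<dots> \<le> (\<eta> / 2) / Lx" using LxLy Lx1 eta by (intro divide_left_mono) auto
        finally show ?thesis by simp
      qed
      ultimately show ?thesis by linarith
    qed
    moreover have "Lx powr \<eta> \<ge> 0" by simp
    ultimately show ?thesis by (smt (verit) mult_left_mono)
  qed
  define k where "k = kk y"
  define N where "N = 5 * k"
  have k1: "k \<ge> 1" using kk1[OF y1] by (simp add: k_def)
  have kle: "real k \<le> real y powr (a/2)" unfolding k_def kk_def by simp
  have kge: "real k \<ge> real y powr (a/2) - 1" unfolding k_def kk_def by linarith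
  have NFy: "real N * F y \<le> d * (g x * Lx powr \<eta>)"
  proof -
    have Fy: "F y = g y * Ly powr \<eta>" by (simp add: F_def L_eta_def Ly_def)
    have "real N * F y \<le> (5 * real y powr (a/2)) * ((g x / real y powr a) * Ly powr \<eta>)"
      unfolding Fy N_def using kle gy gyp by (intro mult_mono) auto
    also have "\<dots> = g x * (5 * (real y powr (-a/2) * Ly powr (\<eta> + 1)) / Ly)"
    proof -
      have Lp: "Ly powr (\<eta> + 1) = Ly powr \<eta> * Ly" using Ly1 by (simp add: powr_add)
      have yp: "real y powr (-a/2) * real y powr a = real y powr (a/2)"
        using ypos by (simp add: powr_add[symmetric])
      have "(5 * real y powr (a/2)) * ((g x / real y powr a) * Ly powr \<eta>)
          = 5 * g x * Ly powr \<eta> * (real y powr (a/2) / real y powr a)" by simp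
      also have "real y powr (a/2) / real y powr a = real y powr (-a/2)"
        using ypos yp ya by (simp add: field_simps)
      finally show ?thesis unfolding Lp using Ly1 by (simp add: field_simps)
    qed
    also have "\<dots> \<le> g x * (5 * (c / 50) / Ly)"
      using gx Yp Ly1 by (intro mult_left_mono divide_right_mono) (auto simp: Ly_def)
    also have "\<dots> = d * g x" by (simp add: d_def)
    also have "\<dots> \<le> d * (g x * Lx powr \<eta>)"
    proof -
      have "Lx powr \<eta> \<ge> 1" using Lx1 eta by (simp add: ge_one_powr_ge_zero)
      then show ?thesis using d0 gx by simp
    qed
    finally show ?thesis .
  qed
  have NFy0: "real N * F y \<ge> 0" using Fnn by simp
  define eps where "eps = 1 / h (tt y)"
  have tty': "tt y = real N * real (2 * y)" by (simp add: tt_def N_def k_def)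
  have hpos: "h (tt y) \<ge> (10 / c) * Ly"
  proof -
    have "Ly \<le> log 2 (1 + tt y)" unfolding Ly_def using tty[OF y1] by simp
    then show ?thesis unfolding h_def using c by (intro mult_left_mono) auto
  qed
  have hpos': "(10 / c) * Ly > 0" using c Ly1 by simp
  have eps0: "eps > 0" using hpos hpos' by (simp add: eps_def)
  have epsd: "eps \<le> d"
  proof -
    have hp: "h (tt y) > 0" using hpos hpos' by linarith
    have "eps \<le> 1 / ((10 / c) * Ly)" unfolding eps_def
      by (rule divide_left_mono[OF hpos]) (simp, rule mult_pos_pos[OF hp hpos'])
    also have "\<dots> = d" using c by (simp add: d_def)
    finally show ?thesis .
  qed
  have eps1: "eps \<le> 1" using epsd d1 by simp
  obtain A where sol: "solves A F eps N (streams N (2 * y) (N + 1))"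
      and sp: "space_le A (streams N (2 * y) (N + 1)) (hs (real N * real (2 * y)))"
  proof -
    have "N \<ge> 1" using k1 by (simp add: N_def)
    moreover have "2 * y \<ge> 1" using y1 by simp
    moreover have "eps \<ge> 1 / h (real N * real (2 * y))" using tty' by (simp add: eps_def)
    ultimately show ?thesis using hsA eps0 that by blast
  qed
  have key: "(1 + eps) * (F x + real N * F y) < (1 - eps) * F (x + y)"
  proof -
    have "(1 + eps) * (g x * Lx powr \<eta> + real N * F y) < (1 - eps) * (g (x + y) * Lxy powr \<eta>)"
      by (rule key_ineq[OF gx Lx1 d0 d1 eta gxy gnn Lxyp NFy NFy0 eps0 epsd])
    then show ?thesis by (simp add: F_def L_eta_def Lx_def Lxy_def)
  qed
  define s where "s = hs (tt y)"
  have lb: "(256::real) ^ k \<le> 15 * 2 ^ (nat \<lfloor>s\<rfloor> + 1) * 243 ^ k"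
    using lower_bound[OF Fnn F0 N_def k1 _ eps0 eps1 key sol sp] xy tty' by (simp add: s_def)
  have s0: "s \<ge> 0" using hs tty[OF y1] unfolding s_def sub_polynomial_def by auto
  have p2: "(2::real) ^ (nat \<lfloor>s\<rfloor>) \<le> 2 powr s"
  proof -
    have "(2::real) ^ (nat \<lfloor>s\<rfloor>) = 2 powr (real (nat \<lfloor>s\<rfloor>))" by (simp add: powr_realpow)
    also have "\<dots> \<le> 2 powr s" using s0 by (intro powr_mono) auto
    finally show ?thesis .
  qed
  have lb2: "(256::real) ^ k \<le> 30 * 2 powr s * 243 ^ k"
  proof -
    have "15 * (2::real) ^ (nat \<lfloor>s\<rfloor> + 1) * 243 ^ k = 30 * 2 ^ (nat \<lfloor>s\<rfloor>) * 243 ^ k" by simp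
    also have "\<dots> \<le> 30 * 2 powr s * 243 ^ k" using p2 by (intro mult_right_mono) auto
    finally show ?thesis using lb by linarith
  qed
  have lnineq: "real k * ln 256 \<le> ln 30 + s * ln 2 + real k * ln 243"
  proof -
    have "ln ((256::real) ^ k) \<le> ln (30 * 2 powr s * 243 ^ k)" using lb2 by (intro ln_mono) auto
    then show ?thesis by (simp add: ln_mult ln_realpow ln_powr)
  qed
  have sbound: "s \<le> 10 powr \<delta> * real y powr (a/4)"
  proof -
    have "s \<le> tt y powr \<delta>" using Yp by (simp add: s_def)
    also have "tt y \<le> 10 * real y powr (1 + a/2)"
    proof -
      have "tt y = 10 * (real k * real y)" by (simp add: tty' N_def)
      also have "\<dots> \<le> 10 * (real y powr (a/2) * real y)" using kle by (intro mult_left_mono mult_right_mono) auto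
      also have "\<dots> = 10 * real y powr (1 + a/2)" using ypos by (simp add: powr_add)
      finally show ?thesis .
    qed
    then have "tt y powr \<delta> \<le> (10 * real y powr (1 + a/2)) powr \<delta>"
      using \<delta> tty[OF y1] y1 by (intro powr_mono2) auto
    also have "\<dots> = 10 powr \<delta> * real y powr ((1 + a/2) * \<delta>)" using ypos by (simp add: powr_mult powr_powr)
    also have "(1 + a/2) * \<delta> = a / 4" using a by (simp add: \<delta>_def field_simps)
    finally show ?thesis by simp
  qed
  have l256: "ln (256/243::real) = ln 256 - ln 243" by (simp add: ln_div)
  have C1: "ln (256/243::real) > 0" by (intro ln_gt_zero) simp
  have kl: "real k * ln (256/243) = real k * ln 256 - real k * ln 243"
    unfolding l256 by (simp add: right_diff_distrib)
  have "real k * ln (256/243) \<le> ln 30 + s * ln 2" using lnineq kl by linarith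
  also have "\<dots> \<le> ln 30 + ln 2 * 10 powr \<delta> * real y powr (a/4)"
    using sbound by (simp add: mult.commute mult_left_mono)
  also have "\<dots> < (real y powr (a/2) - 1) * ln (256/243)" using Yp by simp
  also have "\<dots> \<le> real k * ln (256/243)" using kge C1 by (intro mult_right_mono) auto
  finally show False by simp
qed


theorem theorem30:
  fixes g :: "nat \<Rightarrow> real"
  assumes "g \<in> class_G" and "nearly_periodic class_S g"
  shows "\<not> one_pass_tractable g \<or> (\<forall>eta>0. \<not> one_pass_tractable (L_eta eta g))"
  using main_L[OF assms] by blast

end
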